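(* Consider the Jacobi matrix of Example 4.1 and let $x_0\in\mathbb{R}$. Suppose there are constants $C,D>0$ and $\alpha,\beta>0$ such that (i) for all $j\ge1$ and all $n\in C_j\cup A_{j+1}$, $|p_n(x_0)|\le C^{j+1}\exp(\alpha 2^{j^2})$; (ii) for all sufficiently large $j$, $\big(p_{n_j-1}(x_0)^2+p_{n_j}(x_0)^2\big)^{1/2}\ge D^{-(j+1)}\exp(\beta2^{j^2})$, where $n_j$ is the "center" of $C_j$. Then $\displaystyle \frac{p_n(x_0)^2}{\sum_{k=0}^n p_k(x_0)^2}$ does not tend to $0$ as $n\to\infty$ (so the Nevai condition fails at $x_0$).
   Context: Example 4.1: partition $\{1,2,\dots\}$ into successive consecutive blocks $A_1,C_1,A_2,C_2,\dots$ with $\#A_j=3^{j^2}$ and $\#C_j=2^{j^2}$; the Jacobi parameters are $b_n=0$ for all $n$, $a_n=1$ for $n\in A_j$, $a_n=\tfrac12$ for $n\in C_j$. $p_n$ ($n\ge0$) are the orthonormal polynomials defined by $p_{-1}=0$, $p_0=1$, $xp_n=a_{n+1}p_{n+1}+b_{n+1}p_n+a_np_{n-1}$. If $C_j=\{m_j+1,\dots,m_j+2^{j^2}\}$, its "center" is $n_j=m_j+\tfrac12 2^{j^2}$. The Nevai condition at $x_0$ means $K_n(x,x_0)^2\,d\rho(x)/K_n(x_0,x_0)\to\delta_{x_0}$ weakly, where $\rho$ is the orthogonality measure and $K_n(x,y)=\sum_{j=0}^np_j(x)p_j(y)$. *)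

theory Defs
  imports Complex_Main
begin

text \<open>Example 4.1: the positive integers are partitioned into consecutive blocks
  A_1, C_1, A_2, C_2, ... with #A_j = 3^(j^2), #C_j = 2^(j^2) (j >= 1).\<close>

definition startA :: "nat \<Rightarrow> nat" where
  "startA j = (\<Sum>i\<in>{1..<j}. 3 ^ (i^2) + 2 ^ (i^2))"

definition blockA :: "nat \<Rightarrow> nat set" where
  "blockA j = {startA j + 1 .. startA j + 3 ^ (j^2)}"

definition mC :: "nat \<Rightarrow> nat" where
  "mC j = startA j + 3 ^ (j^2)"

definition blockC :: "nat \<Rightarrow> nat set" where
  "blockC j = {mC j + 1 .. mC j + 2 ^ (j^2)}"

text \<open>center n_j = m_j + 2^(j^2)/2 of C_j (an integer since j >= 1)\<close>
definition centerC :: "nat \<Rightarrow> nat" where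
  "centerC j = mC j + 2 ^ (j^2) div 2"

text \<open>Jacobi parameters: b_n = 0, a_n = 1 on the A-blocks and 1/2 on the C-blocks
  (only n >= 1 is relevant).\<close>
definition jac_a :: "nat \<Rightarrow> real" where
  "jac_a n = (if \<exists>j\<ge>1. n \<in> blockC j then 1/2 else 1)"

text \<open>Orthonormal polynomials: p_{-1} = 0, p_0 = 1,
  x p_n = a_{n+1} p_{n+1} + b_{n+1} p_n + a_n p_{n-1} with b = 0.\<close>
fun jac_p :: "nat \<Rightarrow> real \<Rightarrow> real" where
  "jac_p 0 x = 1"
| "jac_p (Suc 0) x = x / jac_a 1"
| "jac_p (Suc (Suc n)) x =
     (x * jac_p (Suc n) x - jac_a (Suc n) * jac_p n x) / jac_a (Suc (Suc n))"

end

theory Submission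
  imports Defs "HOL-Real_Asymp.Real_Asymp"
begin
lemma asym:
  fixes a b c d f e :: real
  assumes "e > 0"
  shows "\<forall>\<^sub>F j in sequentially. real (2*(j+1)) * a + ln (real (2*j+2)) + real (j^2) * b + c
     + real (2*j) * d + f * exp ((real j - 1)^2 * ln 2) < e * exp (real j ^ 2 * ln 2)"
proof -
  define E where "E j = exp (real j ^ 2 * ln 2)" for j :: nat
  have l1: "(\<lambda>j::nat. real j / E j) \<longlonglongrightarrow> 0" unfolding E_def by real_asymp
  have l2: "(\<lambda>j::nat. ln (2 * real j + 2) / E j) \<longlonglongrightarrow> 0" unfolding E_def by real_asymp
  have l3: "(\<lambda>j::nat. real j ^ 2 / E j) \<longlonglongrightarrow> 0" unfolding E_def by real_asymp
  have l4: "(\<lambda>j::nat. 1 / E j) \<longlonglongrightarrow> 0" unfolding E_def by real_asymp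
  have l5: "(\<lambda>j::nat. exp ((real j - 1) ^ 2 * ln 2) / E j) \<longlonglongrightarrow> 0" unfolding E_def by real_asymp
  have "(\<lambda>j. (2*a) * (real j / E j) + (2*a) * (1 / E j) + ln (2 * real j + 2) / E j
      + b * (real j ^ 2 / E j) + c * (1 / E j) + (2*d) * (real j / E j)
      + f * (exp ((real j - 1) ^ 2 * ln 2) / E j)) \<longlonglongrightarrow>
     (2*a)*0 + (2*a)*0 + 0 + b*0 + c*0 + (2*d)*0 + f*0"
    by (intro tendsto_intros l1 l2 l3 l4 l5)
  hence "\<forall>\<^sub>F j in sequentially. (2*a) * (real j / E j) + (2*a) * (1 / E j) + ln (2 * real j + 2) / E j
      + b * (real j ^ 2 / E j) + c * (1 / E j) + (2*d) * (real j / E j)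
      + f * (exp ((real j - 1) ^ 2 * ln 2) / E j) < e"
    using assms by (intro order_tendstoD(2)) auto
  thus ?thesis
  proof (rule eventually_mono)
    fix j :: nat
    assume h: "(2*a) * (real j / E j) + (2*a) * (1 / E j) + ln (2 * real j + 2) / E j
      + b * (real j ^ 2 / E j) + c * (1 / E j) + (2*d) * (real j / E j)
      + f * (exp ((real j - 1) ^ 2 * ln 2) / E j) < e"
    have Ep: "E j > 0" unfolding E_def by simp
    from h have "((2*a) * real j + (2*a) + ln (2 * real j + 2)
      + b * real j ^ 2 + c + (2*d) * real j
      + f * exp ((real j - 1) ^ 2 * ln 2)) / E j < e"
      by (simp add: add_divide_distrib algebra_simps)
    hence "(2*a) * real j + (2*a) + ln (2 * real j + 2)
      + b * real j ^ 2 + c + (2*d) * real j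
      + f * exp ((real j - 1) ^ 2 * ln 2) < e * E j"
      using Ep by (simp add: divide_less_eq)
    thus "real (2*(j+1)) * a + ln (real (2*j+2)) + real (j^2) * b + c
     + real (2*j) * d + f * exp ((real j - 1)^2 * ln 2) < e * exp (real j ^ 2 * ln 2)"
      unfolding E_def by (simp add: algebra_simps)
  qed
qed

lemma startA_Suc: "j \<ge> 1 \<Longrightarrow> startA (Suc j) = startA j + 3^(j^2) + 2^(j^2)"
  unfolding startA_def by (simp add: atLeastLessThanSuc)

lemma block_cover:
  assumes "j \<ge> 1" "mC j < k" "k \<le> mC (Suc j)"
  shows "k \<in> blockC j \<union> blockA (j + 1)"
  using assms startA_Suc[OF assms(1)] unfolding blockC_def blockA_def mC_def by auto

lemma mC_lower: "j \<le> mC j"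
proof -
  have "j \<le> j^2" by (simp add: power2_eq_square)
  also have "j^2 < 2^(j^2)" by (rule less_exp)
  also have "(2::nat)^(j^2) \<le> 3^(j^2)" by (simp add: power_mono)
  finally show ?thesis unfolding mC_def by simp
qed

lemma mC_upper: "mC j + 1 \<le> (2*j+2) * 3^(j^2)"
proof -
  have "startA j \<le> of_nat (card {1..<j}) * (2 * 3^(j^2))"
    unfolding startA_def
  proof (rule sum_bounded_above)
    fix i assume "i \<in> {1..<j}"
    hence "i^2 \<le> j^2" by (simp add: power_mono)
    have a: "(3::nat)^(i^2) \<le> 3^(j^2)" using \<open>i^2 \<le> j^2\<close> by (rule power_increasing) simp
    have "(2::nat)^(i^2) \<le> 3^(i^2)" by (simp add: power_mono)
    with a have "(2::nat)^(i^2) \<le> 3^(j^2)" "(3::nat)^(i^2) \<le> 3^(j^2)" by linarith+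
    thus "(3::nat) ^ i\<^sup>2 + 2 ^ i\<^sup>2 \<le> 2 * 3 ^ j\<^sup>2" by linarith
  qed
  also have "\<dots> \<le> j * (2 * 3^(j^2))" by simp
  finally have "startA j \<le> j * (2 * 3^(j^2))" .
  moreover have "1 \<le> (3::nat)^(j^2)" by simp
  moreover have "(2*j+2)*3^(j^2) = j*(2*3^(j^2)) + 3^(j^2) + (3::nat)^(j^2)"
    by (simp add: algebra_simps)
  ultimately show ?thesis unfolding mC_def by linarith
qed


theorem proposition4p3:
  fixes x0 C D \<alpha> \<beta> :: real
  assumes "C > 0" and "D > 0" and "\<alpha> > 0" and "\<beta> > 0"
    and i: "\<And>j n. j \<ge> 1 \<Longrightarrow> n \<in> blockC j \<union> blockA (j + 1) \<Longrightarrow>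
              \<bar>jac_p n x0\<bar> \<le> C ^ (j + 1) * exp (\<alpha> * 2 ^ (j^2))"
    and ii: "\<forall>\<^sub>F j in sequentially.
              sqrt ((jac_p (centerC j - 1) x0)^2 + (jac_p (centerC j) x0)^2)
                \<ge> inverse (D ^ (j + 1)) * exp (\<beta> * 2 ^ (j^2))"
  shows "\<not> ((\<lambda>n. (jac_p n x0)^2 / (\<Sum>k\<le>n. (jac_p k x0)^2)) \<longlonglongrightarrow> 0)"
proof
  define p where "p n = jac_p n x0" for n
  define S where "S n = (\<Sum>k\<le>n. (p k)^2)" for n
  assume "(\<lambda>n. (jac_p n x0)^2 / (\<Sum>k\<le>n. (jac_p k x0)^2)) \<longlonglongrightarrow> 0"
  hence lim: "(\<lambda>n. (p n)^2 / S n) \<longlonglongrightarrow> 0" unfolding p_def S_def .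
  have S_ge: "S n \<ge> 1" for n
  proof -
    have "S n \<ge> (\<Sum>k\<in>{0}. (p k)^2)" unfolding S_def by (rule sum_mono2) auto
    thus ?thesis by (simp add: p_def)
  qed
  define \<delta> where "\<delta> = 1 - exp (-\<beta>)"
  have \<delta>pos: "\<delta> > 0" unfolding \<delta>_def using \<open>\<beta> > 0\<close> by simp
  from order_tendstoD(2)[OF lim \<delta>pos] obtain N where N: "\<And>n. n \<ge> N \<Longrightarrow> (p n)^2 / S n < \<delta>"
    by (auto simp: eventually_sequentially)
  have step: "S (Suc m) \<le> exp \<beta> * S m" if "Suc m \<ge> N" for m
  proof -
    have eq: "S (Suc m) = S m + (p (Suc m))^2" unfolding S_def by simp
    have pos: "S (Suc m) > 0" using S_ge[of "Suc m"] by simp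
    from N[OF that] pos have "(p (Suc m))^2 < \<delta> * S (Suc m)" by (simp add: divide_less_eq)
    with eq have "exp (-\<beta>) * S (Suc m) < S m" unfolding \<delta>_def by (simp add: algebra_simps)
    hence "exp \<beta> * (exp (-\<beta>) * S (Suc m)) \<le> exp \<beta> * S m" by simp
    thus ?thesis by (simp add: exp_minus field_simps)
  qed
  have growth: "S (m + h) \<le> exp (\<beta> * real h) * S m" if "m \<ge> N" for m h
  proof (induction h)
    case 0 thus ?case by simp
  next
    case (Suc h)
    have "S (m + Suc h) \<le> exp \<beta> * S (m + h)" using step[of "m+h"] that by simp
    also have "\<dots> \<le> exp \<beta> * (exp (\<beta> * real h) * S m)" using Suc by simp
    also have "\<dots> = exp (\<beta> * real (Suc h)) * S m"
      by (simp add: exp_add[symmetric] algebra_simps)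
    finally show ?case .
  qed
  define C' where "C' = max 1 C"
  have C'ge: "C' \<ge> 1" "C \<le> C'" unfolding C'_def by auto
  define K where "K = Max (insert 1 ((\<lambda>k. \<bar>p k\<bar>) ` {..mC 1}))"
  have Kge: "K \<ge> 1" unfolding K_def by simp
  have Kb: "\<bar>p k\<bar> \<le> K" if "k \<le> mC 1" for k
    unfolding K_def using that by (intro Max_ge) auto
  have bound: "\<forall>k\<le>mC j. \<bar>p k\<bar> \<le> K * C'^j * exp (\<alpha> * 2^((j-1)^2))" if "j \<ge> 1" for j
    using that
  proof (induction j rule: nat_induct_at_least)
    case base
    have e1: "1 \<le> exp \<alpha>" using \<open>\<alpha> > 0\<close> by simp
    have "1 * 1 \<le> C' * exp \<alpha>" using C'ge e1 by (intro mult_mono) auto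
    hence "K * 1 \<le> K * (C' * exp \<alpha>)" using Kge by (intro mult_left_mono) auto
    hence "K \<le> K * C'^1 * exp (\<alpha> * 2^((1-1)^2))" by (simp add: mult_ac)
    thus ?case using Kb by (meson order_trans)
  next
    case (Suc j)
    have mono: "K * C'^j * exp (\<alpha> * 2^((j-1)^2)) \<le> K * C'^(Suc j) * exp (\<alpha> * 2^((Suc j - 1)^2))"
    proof -
      have "C'^j \<le> C'^(Suc j)" using C'ge by (simp add: power_increasing)
      moreover have "(2::real)^((j-1)^2) \<le> 2^((Suc j - 1)^2)"
        by (intro power_increasing power_mono) auto
      hence "exp (\<alpha> * 2^((j-1)^2)) \<le> exp (\<alpha> * 2^((Suc j - 1)^2))"
        using \<open>\<alpha> > 0\<close> by simp
      ultimately show ?thesis using Kge C'ge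
        by (intro mult_mono) auto
    qed
    show ?case
    proof (intro allI impI)
      fix k assume k: "k \<le> mC (Suc j)"
      show "\<bar>p k\<bar> \<le> K * C'^(Suc j) * exp (\<alpha> * 2^((Suc j - 1)^2))"
      proof (cases "k \<le> mC j")
        case True thus ?thesis using Suc.IH mono by (meson order_trans)
      next
        case False
        hence "k \<in> blockC j \<union> blockA (j + 1)" using block_cover[OF Suc.hyps] k by simp
        hence "\<bar>p k\<bar> \<le> C ^ (j + 1) * exp (\<alpha> * 2 ^ (j^2))" unfolding p_def using i Suc.hyps by blast
        also have "\<dots> \<le> K * C'^(Suc j) * exp (\<alpha> * 2^((Suc j - 1)^2))"
        proof -
          have "C ^ (j+1) \<le> C'^(Suc j)" using C'ge \<open>C > 0\<close> using power_mono[of C C' "Suc j"] by simp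
          also have "\<dots> \<le> K * C'^(Suc j)" using Kge C'ge by simp
          finally show ?thesis by simp
        qed
        finally show ?thesis .
      qed
    qed
  qed
  have ev: "\<forall>\<^sub>F j in sequentially. j \<ge> max 1 N \<and>
      sqrt ((p (centerC j - 1))^2 + (p (centerC j))^2) \<ge> inverse (D ^ (j + 1)) * exp (\<beta> * 2 ^ (j^2)) \<and>
      real (2*(j+1)) * ln D + ln (real (2*j+2)) + real (j^2) * ln 3 + 2 * ln K
     + real (2*j) * ln C' + (2*\<alpha>) * exp ((real j - 1)^2 * ln 2) < (3*\<beta>/2) * exp (real j ^ 2 * ln 2)"
  proof -
    have e1: "\<forall>\<^sub>F j in sequentially. j \<ge> max 1 N" by (rule eventually_ge_at_top)
    have e2: "\<forall>\<^sub>F j in sequentially. real (2*(j+1)) * ln D + ln (real (2*j+2)) + real (j^2) * ln 3 + 2 * ln K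
     + real (2*j) * ln C' + (2*\<alpha>) * exp ((real j - 1)^2 * ln 2) < (3*\<beta>/2) * exp (real j ^ 2 * ln 2)"
      using \<open>\<beta> > 0\<close> by (intro asym) simp
    show ?thesis using e1 e2 ii unfolding p_def by eventually_elim auto
  qed
  then obtain j where j1: "j \<ge> 1" and jN: "j \<ge> N"
    and jii: "sqrt ((p (centerC j - 1))^2 + (p (centerC j))^2) \<ge> inverse (D ^ (j + 1)) * exp (\<beta> * 2 ^ (j^2))"
    and jas: "real (2*(j+1)) * ln D + ln (real (2*j+2)) + real (j^2) * ln 3 + 2 * ln K
     + real (2*j) * ln C' + (2*\<alpha>) * exp ((real j - 1)^2 * ln 2) < (3*\<beta>/2) * exp (real j ^ 2 * ln 2)"
    by (auto simp: eventually_sequentially)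
  define X :: real where "X = 2^(j^2)"
  define Y :: real where "Y = 2^((j-1)^2)"
  define B where "B = K * C'^j * exp (\<alpha> * Y)"
  define h where "h = (2::nat)^(j^2) div 2"
  have Xe: "exp (real j ^ 2 * ln 2) = X"
  proof -
    have "exp (real j ^ 2 * ln 2) = exp (real (j^2) * ln 2)" by simp
    also have "\<dots> = exp (ln 2) ^ (j^2)" by (rule exp_of_nat_mult)
    finally show ?thesis unfolding X_def by simp
  qed
  have Ye: "exp ((real j - 1) ^ 2 * ln 2) = Y"
  proof -
    have "real j - 1 = real (j - 1)" using j1 by simp
    hence "exp ((real j - 1) ^ 2 * ln 2) = exp (real ((j-1)^2) * ln 2)" by (simp only: of_nat_power)
    also have "\<dots> = exp (ln 2) ^ ((j-1)^2)" by (rule exp_of_nat_mult)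
    finally show ?thesis unfolding Y_def by simp
  qed
  have hX: "real h \<le> X / 2" unfolding h_def X_def
  proof -
    have "real ((2::nat)^(j^2) div 2) \<le> real ((2::nat)^(j^2)) / 2"
      using of_nat_div_le_of_nat[of "(2::nat)^(j^2)" 2] by simp
    thus "real ((2::nat)^(j^2) div 2) \<le> 2^(j^2) / 2" by simp
  qed
  have cen: "centerC j = mC j + h" unfolding centerC_def h_def by simp
  have mCN: "mC j \<ge> N" using mC_lower[of j] jN by simp
  have mC1: "mC j \<ge> 1" using mC_lower[of j] j1 by simp
  let ?q = "(p (centerC j - 1))^2 + (p (centerC j))^2"
  have low0: "0 \<le> inverse (D ^ (j + 1)) * exp (\<beta> * X)" using \<open>D > 0\<close> by simp
  have "(inverse (D ^ (j + 1)) * exp (\<beta> * X))^2 \<le> (sqrt ?q)^2"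
    using jii low0 unfolding X_def by (intro power_mono) auto
  hence low: "(inverse (D ^ (j + 1)) * exp (\<beta> * X))^2 \<le> ?q" by simp
  have "?q = (\<Sum>k\<in>{centerC j - 1, centerC j}. (p k)^2)"
    using cen mC1 by simp
  also have "\<dots> \<le> S (centerC j)" unfolding S_def by (rule sum_mono2) auto
  also have "\<dots> \<le> exp (\<beta> * real h) * S (mC j)" unfolding cen by (rule growth[OF mCN])
  also have "\<dots> \<le> exp (\<beta> * (X/2)) * S (mC j)"
    using hX \<open>\<beta> > 0\<close> S_ge[of "mC j"] by (intro mult_right_mono) auto
  also have "S (mC j) \<le> real (mC j + 1) * B^2"
  proof -
    have "S (mC j) \<le> of_nat (card {..mC j}) * B^2" unfolding S_def
    proof (rule sum_bounded_above)
      fix k assume "k \<in> {..mC j}"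
      hence "\<bar>p k\<bar> \<le> B" using bound[OF j1] unfolding B_def Y_def by auto
      hence "\<bar>p k\<bar>^2 \<le> B^2" by (intro power_mono) auto
      thus "(p k)^2 \<le> B^2" by simp
    qed
    thus ?thesis by simp
  qed
  hence "exp (\<beta> * (X/2)) * S (mC j) \<le> exp (\<beta> * (X/2)) * (real (mC j + 1) * B^2)" by simp
  also have "real (mC j + 1) * B^2 \<le> real ((2*j+2) * 3^(j^2)) * B^2"
    using mC_upper[of j] by (intro mult_right_mono) (simp_all only: of_nat_le_iff zero_le_power2)
  hence "exp (\<beta> * (X/2)) * (real (mC j + 1) * B^2) \<le> exp (\<beta> * (X/2)) * (real ((2*j+2) * 3^(j^2)) * B^2)"
    by simp
  finally have up: "(inverse (D ^ (j + 1)) * exp (\<beta> * X))^2 \<le> exp (\<beta> * (X/2)) * (real ((2*j+2) * 3^(j^2)) * B^2)"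
    using low by linarith
  have Kp: "K > 0" using Kge by simp
  have C'p: "C' > 0" using C'ge by simp
  have "exp (real (2*(j+1)) * ln D + ln (real (2*j+2)) + real (j^2) * ln 3 + 2 * ln K
     + real (2*j) * ln C' + (2*\<alpha>) * Y) =
     D^(2*(j+1)) * real (2*j+2) * 3^(j^2) * K^2 * C'^(2*j) * exp (2*\<alpha>*Y)"
  proof -
    have a1: "exp (real (2*(j+1)) * ln D) = D^(2*(j+1))"
      using exp_of_nat_mult[of "2*(j+1)" "ln D"] \<open>D > 0\<close> by simp
    have a2: "exp (ln (real (2*j+2))) = real (2*j+2)" by (rule exp_ln) simp
    have a3: "exp (real (j^2) * ln 3) = 3^(j^2)"
      using exp_of_nat_mult[of "j^2" "ln (3::real)"] by simp
    have a4: "exp (2 * ln K) = K^2"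
      using exp_of_nat_mult[of 2 "ln K"] Kp by simp
    have a5: "exp (real (2*j) * ln C') = C'^(2*j)"
      using exp_of_nat_mult[of "2*j" "ln C'"] C'p by simp
    show ?thesis
      by (simp only: exp_add a1 a2 a3 a4 a5 mult.assoc)
  qed
  moreover have "exp (real (2*(j+1)) * ln D + ln (real (2*j+2)) + real (j^2) * ln 3 + 2 * ln K
     + real (2*j) * ln C' + (2*\<alpha>) * Y) < exp ((3*\<beta>/2) * X)"
    using jas unfolding Xe Ye by simp
  ultimately have key: "D^(2*(j+1)) * real (2*j+2) * 3^(j^2) * K^2 * C'^(2*j) * exp (2*\<alpha>*Y) < exp ((3*\<beta>/2) * X)"
    by simp
  have Dp: "D^(2*(j+1)) > 0" using \<open>D > 0\<close> by simp
  have lhs: "(inverse (D ^ (j + 1)) * exp (\<beta> * X))^2 = exp (2*\<beta>*X) / D^(2*(j+1))"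
  proof -
    have "(inverse (D ^ (j + 1)) * exp (\<beta> * X))^2 = (exp (\<beta> * X))^2 / (D^(j+1))^2"
      by (simp add: power_mult_distrib divide_inverse power_inverse mult_ac)
    also have "(exp (\<beta> * X))^2 = exp (2*\<beta>*X)"
      by (simp add: exp_double[symmetric] mult_ac)
    also have "(D^(j+1))^2 = D^(2*(j+1))" by (metis power_mult mult.commute)
    finally show ?thesis .
  qed
  have rhs: "exp (\<beta> * (X/2)) * (real ((2*j+2) * 3^(j^2)) * B^2) =
      exp (\<beta> * (X/2)) * (real (2*j+2) * 3^(j^2) * K^2 * C'^(2*j) * exp (2*\<alpha>*Y))"
  proof -
    have "B^2 = K^2 * C'^(2*j) * exp (2*\<alpha>*Y)"
      unfolding B_def by (simp add: power_mult_distrib power_mult[symmetric] exp_double[symmetric] mult_ac)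
    thus ?thesis by (simp only: of_nat_mult of_nat_power) (simp add: mult_ac)
  qed
  from up have "exp (2*\<beta>*X) \<le> D^(2*(j+1)) * (exp (\<beta> * (X/2)) * (real (2*j+2) * 3^(j^2) * K^2 * C'^(2*j) * exp (2*\<alpha>*Y)))"
    unfolding lhs rhs using Dp by (simp add: divide_le_eq mult_ac)
  also have "\<dots> = exp (\<beta> * (X/2)) * (D^(2*(j+1)) * real (2*j+2) * 3^(j^2) * K^2 * C'^(2*j) * exp (2*\<alpha>*Y))"
    by (simp add: mult_ac)
  also have "\<dots> < exp (\<beta> * (X/2)) * exp ((3*\<beta>/2) * X)"
    using key by simp
  also have "\<dots> = exp (2*\<beta>*X)" by (simp add: exp_add[symmetric] algebra_simps)
  finally show False by simp
qed

end
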